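(* Let $\widehat{\mathbf Y}\in\mathbb R^{n\times n}$ be an optimal solution of the SDP, $\epsilon=\|\widehat{\mathbf Y}-\mathbf Y^*\|_1/\|\mathbf Y^*\|_1$, and let $B_1,\dots,B_{k'}$ be the sets output by Step 1 (described in the context) on input $\widehat{\mathbf Y},n,k$. Then there exist a partial matching $\pi'$ between $[k]$ and $[k']$ (an injective map from a subset of $[k]$ into $[k']$) and a universal constant $C>0$ such that \[ \Big|\bigcup_{a:\ \pi'(a)\text{ defined}} C^*_a\cap B_{\pi'(a)}\Big|\ge(1-C\epsilon)n. \]
   Context: Integers $n\ge4$, $k\ge2$, $k\mid n$; points $\mathbf h_1,\dots,\mathbf h_n\in\mathbb R^d$ with ground-truth labels $\sigma^*:[n]\to[k]$ and clusters $C^*_a=\{i:\sigma^*(i)=a\}$, each of size $n/k$. $Y^*_{ij}=\mathbb 1\{\sigma^*(i)=\sigma^*(j)\}$. SDP: $A_{ij}=\|\mathbf h_i-\mathbf h_j\|_2^2$; $\widehat{\mathbf Y}$ minimizes $\langle\mathbf Y,\mathbf A\rangle$ subject to $\mathbf Y\mathbf 1_n=\frac nk\mathbf 1_n$, $\mathbf Y\succeq0$, $\mathrm{diag}(\mathbf Y)=\mathbf 1_n$, $\mathbf Y\ge0$. $\|\cdot\|_1$ is the entrywise $\ell_1$ norm; $\widehat{\mathbf Y}_{u\bullet}$ denotes the $u$-th row. Step 1: set $V=[n]$, $B_0=\emptyset$, $t=0$; while $V\setminus\bigcup_{i\le t}B_i\ne\emptyset$: increase $t$ by one, let $V_t=V\setminus\bigcup_{i<t}B_i$,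 for each $u\in V_t$ let $B(u)=\{w\in V_t:\|\widehat{\mathbf Y}_{u\bullet}-\widehat{\mathbf Y}_{w\bullet}\|_1\le\frac{n}{4k}\}$, let $B_t$ be a set $B(u)$ of maximum cardinality over $u\in V_t$, and if $|B_t|>n/k$ remove arbitrary elements so that $|B_t|=n/k$. The output is $B_1,\dots,B_{k'}$ where $k'$ is the final value of $t$. *)

theory Defs
  imports Complex_Main
begin

text \<open>Points h_1..h_n in R^d are modelled as h :: nat => nat => real, indices i < n,
 coordinates l < d. Matrices are nat => nat => real with indices < n. Labels take
 values in {0..<k}.\<close>

definition sq_dist_matrix :: "nat \<Rightarrow> (nat \<Rightarrow> nat \<Rightarrow> real) \<Rightarrow> nat \<Rightarrow> nat \<Rightarrow> real" where
  "sq_dist_matrix d h i j = (\<Sum>l<d. (h i l - h j l)^2)"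

definition frob_inner :: "nat \<Rightarrow> (nat \<Rightarrow> nat \<Rightarrow> real) \<Rightarrow> (nat \<Rightarrow> nat \<Rightarrow> real) \<Rightarrow> real" where
  "frob_inner n Y A = (\<Sum>i<n. \<Sum>j<n. Y i j * A i j)"

definition entry_l1 :: "nat \<Rightarrow> (nat \<Rightarrow> nat \<Rightarrow> real) \<Rightarrow> real" where
  "entry_l1 n M = (\<Sum>i<n. \<Sum>j<n. \<bar>M i j\<bar>)"

definition psd :: "nat \<Rightarrow> (nat \<Rightarrow> nat \<Rightarrow> real) \<Rightarrow> bool" where
  "psd n Y \<longleftrightarrow> (\<forall>i<n. \<forall>j<n. Y i j = Y j i) \<and>
     (\<forall>x :: nat \<Rightarrow> real. (\<Sum>i<n. \<Sum>j<n. x i * Y i j * x j) \<ge> 0)"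

definition sdp_feasible :: "nat \<Rightarrow> nat \<Rightarrow> (nat \<Rightarrow> nat \<Rightarrow> real) \<Rightarrow> bool" where
  "sdp_feasible n k Y \<longleftrightarrow>
     (\<forall>i<n. (\<Sum>j<n. Y i j) = real n / real k) \<and>
     psd n Y \<and>
     (\<forall>i<n. Y i i = 1) \<and>
     (\<forall>i<n. \<forall>j<n. Y i j \<ge> 0)"

definition sdp_optimal :: "nat \<Rightarrow> nat \<Rightarrow> nat \<Rightarrow> (nat \<Rightarrow> nat \<Rightarrow> real) \<Rightarrow> (nat \<Rightarrow> nat \<Rightarrow> real) \<Rightarrow> bool" where
  "sdp_optimal n k d h Y \<longleftrightarrow> sdp_feasible n k Y \<and>
     (\<forall>Y'. sdp_feasible n k Y' \<longrightarrow>
        frob_inner n Y (sq_dist_matrix d h) \<le> frob_inner n Y' (sq_dist_matrix d h))"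

definition Ystar :: "(nat \<Rightarrow> nat) \<Rightarrow> nat \<Rightarrow> nat \<Rightarrow> real" where
  "Ystar \<sigma> i j = (if \<sigma> i = \<sigma> j then 1 else 0)"

definition cluster :: "nat \<Rightarrow> (nat \<Rightarrow> nat) \<Rightarrow> nat \<Rightarrow> nat set" where
  "cluster n \<sigma> a = {i. i < n \<and> \<sigma> i = a}"

definition nbhd :: "nat \<Rightarrow> nat \<Rightarrow> (nat \<Rightarrow> nat \<Rightarrow> real) \<Rightarrow> nat set \<Rightarrow> nat \<Rightarrow> nat set" where
  "nbhd n k Y V u = {w \<in> V. (\<Sum>j<n. \<bar>Y u j - Y w j\<bar>) \<le> real n / (4 * real k)}"

text \<open>Bs (0-indexed list, Bs!t = B_{t+1}) is a possible output of Step 1 for some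
 resolution of the arbitrary choices.\<close>
definition step1_output :: "nat \<Rightarrow> nat \<Rightarrow> (nat \<Rightarrow> nat \<Rightarrow> real) \<Rightarrow> nat set list \<Rightarrow> bool" where
  "step1_output n k Y Bs \<longleftrightarrow>
     (\<forall>t < length Bs.
        (let V = {0..<n} - \<Union>(set (take t Bs)) in
          V \<noteq> {} \<and>
          (\<exists>u\<in>V. (\<forall>v\<in>V. card (nbhd n k Y V v) \<le> card (nbhd n k Y V u)) \<and>
                  Bs ! t \<subseteq> nbhd n k Y V u \<and>
                  card (Bs ! t) = min (card (nbhd n k Y V u)) (n div k)))) \<and>
     {0..<n} - \<Union>(set Bs) = {}"

end

theory Submission
  imports Defs
begin

lemma sum_ind: "finite A \<Longrightarrow> (\<Sum>x\<in>A. if P x then (1::real) else 0) = real (card {x\<in>A. P x})"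
  by (simp add: sum.If_cases Int_def conj_commute)

lemma main:
  fixes n k :: nat and \<sigma> :: "nat \<Rightarrow> nat" and Y :: "nat \<Rightarrow> nat \<Rightarrow> real" and Bs :: "nat set list"
  assumes n4: "n \<ge> 4" and k2: "k \<ge> 2" and kd: "k dvd n"
    and sig: "\<forall>i<n. \<sigma> i < k" and cc: "\<forall>a<k. card (cluster n \<sigma> a) = n div k"
    and step: "step1_output n k Y Bs"
  shows "\<exists>\<pi>::nat \<Rightarrow> nat option.
         dom \<pi> \<subseteq> {0..<k} \<and> ran \<pi> \<subseteq> {0..<length Bs} \<and> inj_on \<pi> (dom \<pi>) \<and>
         real (card (\<Union>a\<in>dom \<pi>. cluster n \<sigma> a \<inter> Bs ! the (\<pi> a)))
           \<ge> (1 - 16 * (entry_l1 n (\<lambda>i j. Y i j - Ystar \<sigma> i j) / entry_l1 n (Ystar \<sigma>))) * real n"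
proof -
  define m where "m = n div k"
  have nmk: "n = m * k" using kd unfolding m_def by simp
  have m1: "m \<ge> 1"
  proof (rule ccontr)
    assume "\<not> m \<ge> 1"
    then have "m = 0" by simp
    then have "n = 0" using nmk by simp
    then show False using n4 by simp
  qed
  have rnmk: "real n = real m * real k" using nmk by (metis of_nat_mult)
  have kpos: "real k > 0" using k2 by simp
  have rm: "real n / real k = real m" using kpos unfolding rnmk by simp
  have rm4: "real n / (4 * real k) = real m / 4" using kpos unfolding rnmk by simp
  define \<delta> where "\<delta> u = (\<Sum>j<n. \<bar>Y u j - Ystar \<sigma> u j\<bar>)" for u
  define Good where "Good = {u. u < n \<and> \<delta> u \<le> real m / 8}"
  define Bad where "Bad = {u. u < n \<and> \<not> \<delta> u \<le> real m / 8}"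
  define G where "G a = cluster n \<sigma> a \<inter> Good" for a
  define S where "S = entry_l1 n (\<lambda>i j. Y i j - Ystar \<sigma> i j)"
  have S_eq: "S = (\<Sum>u<n. \<delta> u)" unfolding S_def entry_l1_def \<delta>_def by simp
  have dpos: "\<delta> u \<ge> 0" for u unfolding \<delta>_def by (intro sum_nonneg) auto
  have cl_card: "card {j. j < n \<and> \<sigma> j = \<sigma> i} = m" if "i < n" for i
    using cc sig that unfolding cluster_def m_def by auto
  have Ystar_l1: "entry_l1 n (Ystar \<sigma>) = real n * real m"
  proof -
    have "entry_l1 n (Ystar \<sigma>) = (\<Sum>i<n. \<Sum>j<n. if \<sigma> j = \<sigma> i then (1::real) else 0)"
      unfolding entry_l1_def Ystar_def by (intro sum.cong refl) auto
    also have "\<dots> = (\<Sum>i<n. real m)"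
    proof (intro sum.cong refl)
      fix i assume "i \<in> {..<n}"
      then have "card {j\<in>{..<n}. \<sigma> j = \<sigma> i} = m" using cl_card[of i] by (simp add: lessThan_def)
      then show "(\<Sum>j<n. if \<sigma> j = \<sigma> i then (1::real) else 0) = real m" by (simp add: sum_ind)
    qed
    finally show ?thesis by simp
  qed
  have fGB: "finite Good" "finite Bad" unfolding Good_def Bad_def by auto
  have GB: "Good \<union> Bad = {..<n}" "Good \<inter> Bad = {}" unfolding Good_def Bad_def by auto
  have cardGB: "card Good + card Bad = n"
    using card_Un_disjoint[OF fGB GB(2)] GB(1) by simp
  have bad_bound: "real (card Bad) * (real m / 8) \<le> S"
  proof -
    have "real (card Bad) * (real m / 8) = (\<Sum>u\<in>Bad. real m / 8)" by simp
    also have "\<dots> \<le> (\<Sum>u\<in>Bad. \<delta> u)" by (intro sum_mono) (auto simp: Bad_def)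
    also have "\<dots> \<le> (\<Sum>u<n. \<delta> u)" by (intro sum_mono2) (auto simp: Bad_def dpos)
    finally show ?thesis using S_eq by simp
  qed
  have tri: "(\<Sum>j<n. \<bar>Y u j - Y v j\<bar>) \<le> (\<Sum>j<n. \<bar>Y u j - Z j\<bar>) + (\<Sum>j<n. \<bar>Y v j - Z j\<bar>)" for u v Z
    unfolding sum.distrib[symmetric] by (intro sum_mono) linarith
  have same: "(\<Sum>j<n. \<bar>Y u j - Y v j\<bar>) \<le> real m / 4" if "u \<in> Good" "v \<in> Good" "\<sigma> u = \<sigma> v" for u v
  proof -
    have "(\<Sum>j<n. \<bar>Y u j - Y v j\<bar>) \<le> \<delta> u + \<delta> v"
      using tri[of u v "Ystar \<sigma> u"] that(3) unfolding \<delta>_def Ystar_def by simp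
    then show ?thesis using that unfolding Good_def by simp
  qed
  have diff: "(\<Sum>j<n. \<bar>Y u j - Y v j\<bar>) > real m / 2" if "u \<in> Good" "v \<in> Good" "\<sigma> u \<noteq> \<sigma> v" for u v
  proof -
    have un: "u < n" using that unfolding Good_def by simp
    have "real m = (\<Sum>j<n. if \<sigma> j = \<sigma> u then (1::real) else 0)"
      using cl_card[OF un] by (simp add: sum_ind lessThan_def)
    also have "\<dots> \<le> (\<Sum>j<n. \<bar>Ystar \<sigma> u j - Ystar \<sigma> v j\<bar>)"
      by (intro sum_mono) (use that(3) in \<open>auto simp: Ystar_def\<close>)
    also have "\<dots> \<le> (\<Sum>j<n. \<bar>Y u j - Y v j\<bar>) + \<delta> u + \<delta> v"
      unfolding \<delta>_def sum.distrib[symmetric] by (intro sum_mono) linarith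
    finally show ?thesis using that m1 unfolding Good_def by simp
  qed
  define V where "V t = {0..<n} - \<Union>(set (take t Bs))" for t
  have stepE: "\<exists>c\<in>V t. (\<forall>v\<in>V t. card (nbhd n k Y (V t) v) \<le> card (nbhd n k Y (V t) c)) \<and>
                  Bs ! t \<subseteq> nbhd n k Y (V t) c \<and>
                  card (Bs ! t) = min (card (nbhd n k Y (V t) c)) m" if "t < length Bs" for t
    using step that unfolding step1_output_def V_def m_def Let_def by blast
  have cover: "{0..<n} \<subseteq> \<Union>(set Bs)" using step unfolding step1_output_def by blast
  have BsV: "Bs ! t \<subseteq> V t" if "t < length Bs" for t
    using stepE[OF that] unfolding nbhd_def by blast
  have Bsn: "Bs ! t \<subseteq> {..<n}" if "t < length Bs" for t
    using BsV[OF that] unfolding V_def by auto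
  have disj: "Bs ! s \<inter> Bs ! t = {}" if "s < t" "t < length Bs" for s t
  proof -
    have "take t Bs ! s \<in> set (take t Bs)" by (rule nth_mem) (use that in simp)
    then have "Bs ! s \<in> set (take t Bs)" using that by simp
    then show ?thesis using BsV[OF that(2)] unfolding V_def by blast
  qed
  have disj2: "Bs ! s \<inter> Bs ! t = {}" if "s \<noteq> t" "s < length Bs" "t < length Bs" for s t
    using disj[of s t] disj[of t s] that by (cases "s < t") auto
  have samecl: "\<sigma> x = \<sigma> y" if H: "t < length Bs" "x \<in> Bs ! t \<inter> Good" "y \<in> Bs ! t \<inter> Good" for t x y
  proof (rule ccontr)
    assume ne: "\<sigma> x \<noteq> \<sigma> y"
    obtain c where c: "Bs ! t \<subseteq> nbhd n k Y (V t) c" using stepE[OF H(1)] by blast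
    have "(\<Sum>j<n. \<bar>Y x j - Y y j\<bar>) \<le> (\<Sum>j<n. \<bar>Y x j - Y c j\<bar>) + (\<Sum>j<n. \<bar>Y y j - Y c j\<bar>)"
      by (rule tri)
    also have "\<dots> \<le> real m / 4 + real m / 4"
    proof -
      have "(\<Sum>j<n. \<bar>Y c j - Y x j\<bar>) \<le> real m / 4" "(\<Sum>j<n. \<bar>Y c j - Y y j\<bar>) \<le> real m / 4"
        using c H unfolding nbhd_def rm4 by auto
      moreover have "(\<Sum>j<n. \<bar>Y x j - Y c j\<bar>) = (\<Sum>j<n. \<bar>Y c j - Y x j\<bar>)"
        "(\<Sum>j<n. \<bar>Y y j - Y c j\<bar>) = (\<Sum>j<n. \<bar>Y c j - Y y j\<bar>)" by (simp_all add: abs_minus_commute)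
      ultimately show ?thesis by linarith
    qed
    finally show False using diff[of x y] ne H by auto
  qed
  define D where "D = {a. a < k \<and> G a \<noteq> {}}"
  define p where "p a = (LEAST t. t < length Bs \<and> Bs ! t \<inter> G a \<noteq> {})" for a
  have pex: "\<exists>t. t < length Bs \<and> Bs ! t \<inter> G a \<noteq> {}" if H: "a \<in> D" for a
  proof -
    obtain x where x: "x \<in> G a" using H unfolding D_def by auto
    then have "x \<in> {0..<n}" unfolding G_def Good_def by auto
    then obtain B where "B \<in> set Bs" "x \<in> B" using cover by blast
    then show ?thesis using x by (metis disjoint_iff in_set_conv_nth)
  qed
  have pP: "p a < length Bs \<and> Bs ! p a \<inter> G a \<noteq> {}" if "a \<in> D" for a
    using LeastI_ex[OF pex[OF that]] unfolding p_def .
  have pmin: "Bs ! s \<inter> G a = {}" if "a \<in> D" "s < p a" for a s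
    using not_less_Least[of s "\<lambda>t. t < length Bs \<and> Bs ! t \<inter> G a \<noteq> {}"] that pP[OF that(1)]
    unfolding p_def by auto
  have pinj: "p a \<noteq> p b" if H: "a \<in> D" "b \<in> D" "a \<noteq> b" for a b
  proof
    assume eq: "p a = p b"
    obtain x where x: "x \<in> Bs ! p a \<inter> G a" using pP[OF H(1)] by blast
    obtain y where y: "y \<in> Bs ! p a \<inter> G b" using pP[OF H(2)] eq by auto
    have "\<sigma> x = \<sigma> y" using samecl[of "p a" x y] x y pP[OF H(1)] unfolding G_def by auto
    then show False using x y H(3) unfolding G_def cluster_def by auto
  qed
  define \<pi> where "\<pi> a = (if a \<in> D then Some (p a) else None)" for a
  have domp: "dom \<pi> = D" unfolding \<pi>_def dom_def by auto
  have thep: "the (\<pi> a) = p a" if "a \<in> D" for a using that unfolding \<pi>_def by simp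
  have fG: "finite (G a)" for a unfolding G_def using fGB by simp
  have Gm: "card (G a) \<le> m" if "a < k" for a
  proof -
    have "card (G a) \<le> card (cluster n \<sigma> a)" unfolding G_def
      by (intro card_mono) (auto simp: cluster_def)
    then show ?thesis using cc that unfolding m_def by simp
  qed
  have Gsub: "G a \<subseteq> V (p a)" if "a \<in> D" for a
  proof
    fix x assume x: "x \<in> G a"
    then have "x \<in> {0..<n}" unfolding G_def Good_def by auto
    moreover have "x \<notin> B" if HB: "B \<in> set (take (p a) Bs)" for B
    proof -
      obtain s where "s < length (take (p a) Bs)" "B = take (p a) Bs ! s"
        using HB by (metis in_set_conv_nth)
      then have "s < p a" "B = Bs ! s" by auto
      then show ?thesis using pmin[OF \<open>a \<in> D\<close>] x by blast
    qed
    ultimately show "x \<in> V (p a)" unfolding V_def by blast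
  qed
  have cardG: "card (G a) \<le> card (Bs ! p a)" if aD: "a \<in> D" for a
  proof -
    define t where "t = p a"
    have t: "t < length Bs" "Bs ! t \<inter> G a \<noteq> {}" using pP[OF aD] unfolding t_def by auto
    obtain w where w: "w \<in> Bs ! t" "w \<in> G a" using t(2) by blast
    obtain c where c: "c \<in> V t" "\<forall>v\<in>V t. card (nbhd n k Y (V t) v) \<le> card (nbhd n k Y (V t) c)"
      "card (Bs ! t) = min (card (nbhd n k Y (V t) c)) m" using stepE[OF t(1)] by blast
    have wV: "w \<in> V t" using BsV[OF t(1)] w by blast
    have fV: "finite (V t)" unfolding V_def by simp
    have "G a \<subseteq> nbhd n k Y (V t) w"
    proof
      fix v assume v: "v \<in> G a"
      have "v \<in> V t" using Gsub[OF aD] v unfolding t_def by blast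
      moreover have "(\<Sum>j<n. \<bar>Y w j - Y v j\<bar>) \<le> real m / 4"
        using same[of w v] v w unfolding G_def cluster_def by auto
      ultimately show "v \<in> nbhd n k Y (V t) w" unfolding nbhd_def rm4 by simp
    qed
    then have "card (G a) \<le> card (nbhd n k Y (V t) w)"
      by (intro card_mono) (auto simp: nbhd_def fV)
    also have "\<dots> \<le> card (nbhd n k Y (V t) c)" using c(2) wV by blast
    finally have g1: "card (G a) \<le> card (nbhd n k Y (V t) c)" .
    have g2: "card (G a) \<le> m" using Gm[of a] aD unfolding D_def by blast
    have "card (G a) \<le> card (Bs ! t)" using g1 g2 c(3) by linarith
    then show ?thesis unfolding t_def .
  qed
  have loc: "real (card (G a)) - real (card (Bs ! p a \<inter> Bad)) \<le> real (card (cluster n \<sigma> a \<inter> Bs ! p a))"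
    if aD: "a \<in> D" for a
  proof -
    define t where "t = p a"
    have t: "t < length Bs" "Bs ! t \<inter> G a \<noteq> {}" using pP[OF aD] unfolding t_def by auto
    obtain w where w: "w \<in> Bs ! t" "w \<in> G a" using t(2) by blast
    have "Bs ! t \<subseteq> (cluster n \<sigma> a \<inter> Bs ! t) \<union> (Bs ! t \<inter> Bad)"
    proof
      fix x assume x: "x \<in> Bs ! t"
      have xn: "x < n" using Bsn[OF t(1)] x by auto
      show "x \<in> (cluster n \<sigma> a \<inter> Bs ! t) \<union> (Bs ! t \<inter> Bad)"
      proof (cases "x \<in> Good")
        case True
        then have "\<sigma> x = \<sigma> w" using samecl[OF t(1), of x w] x w unfolding G_def by auto
        then show ?thesis using w x xn unfolding G_def cluster_def by auto
      next
        case False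
        then show ?thesis using x xn unfolding Good_def Bad_def by auto
      qed
    qed
    moreover have "finite (Bs ! t)" by (rule finite_subset[OF Bsn[OF t(1)]]) simp
    ultimately have "card (Bs ! t) \<le> card ((cluster n \<sigma> a \<inter> Bs ! t) \<union> (Bs ! t \<inter> Bad))"
      by (intro card_mono) auto
    also have "\<dots> \<le> card (cluster n \<sigma> a \<inter> Bs ! t) + card (Bs ! t \<inter> Bad)" by (rule card_Un_le)
    finally have "card (Bs ! t) \<le> card (cluster n \<sigma> a \<inter> Bs ! t) + card (Bs ! t \<inter> Bad)" .
    moreover have "card (G a) \<le> card (Bs ! t)" using cardG[OF aD] unfolding t_def .
    ultimately show ?thesis unfolding t_def by linarith
  qed
  have fD: "finite D" unfolding D_def by simp
  have Dk: "D \<subseteq> {0..<k}" unfolding D_def by auto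
  have ranp: "ran \<pi> \<subseteq> {0..<length Bs}" unfolding \<pi>_def ran_def using pP by (auto split: if_splits)
  have injp: "inj_on \<pi> (dom \<pi>)" unfolding domp inj_on_def \<pi>_def using pinj by auto
  have Ueq: "(\<Union>a\<in>dom \<pi>. cluster n \<sigma> a \<inter> Bs ! the (\<pi> a)) = (\<Union>a\<in>D. cluster n \<sigma> a \<inter> Bs ! p a)"
    unfolding domp using thep by auto
  have cU: "card (\<Union>a\<in>D. cluster n \<sigma> a \<inter> Bs ! p a) = (\<Sum>a\<in>D. card (cluster n \<sigma> a \<inter> Bs ! p a))"
    by (rule card_UN_disjoint) (auto simp: fD cluster_def)
  have GU: "Good = (\<Union>a\<in>D. G a)"
  proof
    show "Good \<subseteq> (\<Union>a\<in>D. G a)"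
    proof
      fix u assume u: "u \<in> Good"
      then have "u < n" unfolding Good_def by simp
      then have "u \<in> G (\<sigma> u)" "\<sigma> u \<in> D" using u sig unfolding G_def D_def cluster_def by auto
      then show "u \<in> (\<Union>a\<in>D. G a)" by blast
    qed
  qed (auto simp: G_def)
  have cG: "card Good = (\<Sum>a\<in>D. card (G a))"
    unfolding GU by (rule card_UN_disjoint) (auto simp: fD fG G_def cluster_def)
  have cB: "card (\<Union>a\<in>D. Bs ! p a \<inter> Bad) = (\<Sum>a\<in>D. card (Bs ! p a \<inter> Bad))"
  proof (rule card_UN_disjoint)
    show "\<forall>i\<in>D. \<forall>j\<in>D. i \<noteq> j \<longrightarrow> Bs ! p i \<inter> Bad \<inter> (Bs ! p j \<inter> Bad) = {}"
      using disj2 pinj pP by blast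
  qed (auto simp: fD fGB)
  have cB2: "card (\<Union>a\<in>D. Bs ! p a \<inter> Bad) \<le> card Bad"
    by (intro card_mono fGB) auto
  have "real (card Good) - real (card Bad) \<le> (\<Sum>a\<in>D. real (card (G a)) - real (card (Bs ! p a \<inter> Bad)))"
  proof -
    have s1: "(\<Sum>a\<in>D. real (card (G a))) = real (card Good)" unfolding cG by simp
    have "(\<Sum>a\<in>D. real (card (Bs ! p a \<inter> Bad))) = real (card (\<Union>a\<in>D. Bs ! p a \<inter> Bad))"
      by (simp only: cB of_nat_sum)
    also have "\<dots> \<le> real (card Bad)" using cB2 by (simp only: of_nat_le_iff)
    finally have s2: "(\<Sum>a\<in>D. real (card (Bs ! p a \<inter> Bad))) \<le> real (card Bad)" .
    show ?thesis unfolding sum_subtractf using s1 s2 by linarith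
  qed
  also have "\<dots> \<le> (\<Sum>a\<in>D. real (card (cluster n \<sigma> a \<inter> Bs ! p a)))"
    by (intro sum_mono loc)
  also have "\<dots> = real (card (\<Union>a\<in>dom \<pi>. cluster n \<sigma> a \<inter> Bs ! the (\<pi> a)))"
    unfolding Ueq cU by simp
  finally have fin0: "real (card Good) - real (card Bad) \<le> real (card (\<Union>a\<in>dom \<pi>. cluster n \<sigma> a \<inter> Bs ! the (\<pi> a)))" .
  have GBn: "real (card Good) + real (card Bad) = real n" using cardGB of_nat_add by metis
  have fin1: "real n - 2 * real (card Bad) \<le> real (card (\<Union>a\<in>dom \<pi>. cluster n \<sigma> a \<inter> Bs ! the (\<pi> a)))"
    using fin0 GBn by linarith
  have mpos: "real m > 0" using m1 by simp
  have npos: "real n > 0" using n4 by simp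
  have "(1 - 16 * (S / (real n * real m))) * real n = real n - 16 * S / real m"
    using mpos npos by (simp add: field_simps)
  also have "\<dots> \<le> real n - 2 * real (card Bad)"
  proof -
    have "2 * real (card Bad) * real m \<le> 16 * S" using bad_bound by (simp add: mult.commute)
    then have "2 * real (card Bad) \<le> 16 * S / real m" using mpos by (simp add: field_simps)
    then show ?thesis by simp
  qed
  finally have "(1 - 16 * (S / (real n * real m))) * real n \<le> real (card (\<Union>a\<in>dom \<pi>. cluster n \<sigma> a \<inter> Bs ! the (\<pi> a)))"
    using fin1 by linarith
  then show ?thesis using Dk ranp injp domp unfolding S_def Ystar_l1 by blast
qed

theorem lemma12:
  shows "\<exists>C::real > 0. \<forall>(n::nat) (k::nat) (d::nat) (h::nat \<Rightarrow> nat \<Rightarrow> real)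
      (\<sigma>::nat \<Rightarrow> nat) (Y::nat \<Rightarrow> nat \<Rightarrow> real) (Bs::nat set list).
      n \<ge> 4 \<and> k \<ge> 2 \<and> k dvd n \<and>
      (\<forall>i<n. \<sigma> i < k) \<and> (\<forall>a<k. card (cluster n \<sigma> a) = n div k) \<and>
      sdp_optimal n k d h Y \<and> step1_output n k Y Bs \<longrightarrow>
      (\<exists>\<pi>::nat \<Rightarrow> nat option.
         dom \<pi> \<subseteq> {0..<k} \<and> ran \<pi> \<subseteq> {0..<length Bs} \<and> inj_on \<pi> (dom \<pi>) \<and>
         real (card (\<Union>a\<in>dom \<pi>. cluster n \<sigma> a \<inter> Bs ! the (\<pi> a)))
           \<ge> (1 - C * (entry_l1 n (\<lambda>i j. Y i j - Ystar \<sigma> i j) / entry_l1 n (Ystar \<sigma>))) * real n)"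
proof (intro exI[of _ "16::real"] conjI allI impI)
  show "(16::real) > 0" by simp
next
  fix n k d h \<sigma> Y Bs
  assume "4 \<le> n \<and> 2 \<le> k \<and> k dvd n \<and> (\<forall>i<n. \<sigma> i < k) \<and>
       (\<forall>a<k. card (cluster n \<sigma> a) = n div k) \<and> sdp_optimal n k d h Y \<and> step1_output n k Y Bs"
  then show "\<exists>\<pi>::nat \<Rightarrow> nat option.
         dom \<pi> \<subseteq> {0..<k} \<and> ran \<pi> \<subseteq> {0..<length Bs} \<and> inj_on \<pi> (dom \<pi>) \<and>
         real (card (\<Union>a\<in>dom \<pi>. cluster n \<sigma> a \<inter> Bs ! the (\<pi> a)))
           \<ge> (1 - 16 * (entry_l1 n (\<lambda>i j. Y i j - Ystar \<sigma> i j) / entry_l1 n (Ystar \<sigma>))) * real n"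
    using main[of n k \<sigma> Y Bs] by blast
qed

end
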